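(* Let $n\ge2$, let $A$ be a random variable with values in $\{1,\dots,n\}$, $\mathbb{P}(A=i)=p_i$, $\sum_i p_i=1$, and let $(X_1,\dots,X_n)$ be independent of $A$ and multivariate normal with all means equal to $\mu<0$, all variances equal to $\sigma^2>0$, and all pairwise correlations equal to $\rho$. For $z\in\mathbb{R}$ let $h(z)=\mathbb{E}\left[\mathbb{I}(X_A>z)\sum_{i=1}^n X_i\right]$. If $-1/(n-1)<\rho<1$, then $h'(0)>0$, $h$ attains its maximum at \[z^*=\frac{(n-1)(\rho-1)}{(n-1)\rho+1}\,\mu,\] and $h(z^* )>0$.
   Context: $h(z)$ is the long-run average overall performance of a firm that, in each period, picks a primary dimension $A$ and adopts the innovation iff its effect $X_A$ on that dimension exceeds the hurdle rate $z$. *)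

theory Defs
  imports "HOL-Probability.Probability"
begin

text \<open>Gaussian random vector (X_i)_{i in I} with mean vector m and covariance matrix C,
  defined (Cramer-Wold) by: every linear combination sum c_i X_i is a (univariate) normal
  random variable with mean sum c_i m_i and variance sum c_i c_j C_ij; a combination of
  variance zero is almost surely constant.\<close>
definition gaussian_vector ::
  "'a measure \<Rightarrow> nat set \<Rightarrow> (nat \<Rightarrow> 'a \<Rightarrow> real) \<Rightarrow> (nat \<Rightarrow> real) \<Rightarrow> (nat \<Rightarrow> nat \<Rightarrow> real) \<Rightarrow> bool"
where
  "gaussian_vector M I X m C \<longleftrightarrow>
     (\<forall>i\<in>I. X i \<in> borel_measurable M) \<and>
     (\<forall>c :: nat \<Rightarrow> real.
        let Y = (\<lambda>\<omega>. \<Sum>i\<in>I. c i * X i \<omega>);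
            mu = (\<Sum>i\<in>I. c i * m i);
            v = (\<Sum>i\<in>I. \<Sum>j\<in>I. c i * c j * C i j)
        in v \<ge> 0 \<and>
           (v > 0 \<longrightarrow> distributed M lborel Y (\<lambda>x. ennreal (normal_density mu (sqrt v) x))) \<and>
           (v = 0 \<longrightarrow> (AE \<omega> in M. Y \<omega> = mu)))"

definition hfun :: "'a measure \<Rightarrow> nat \<Rightarrow> ('a \<Rightarrow> nat) \<Rightarrow> (nat \<Rightarrow> 'a \<Rightarrow> real) \<Rightarrow> real \<Rightarrow> real" where
  "hfun M n A X z = (\<integral>\<omega>. (if X (A \<omega>) \<omega> > z then 1 else 0) * (\<Sum>i=1..n. X i \<omega>) \<partial>M)"

end

theory Submission
  imports Defs
begin

lemma qform:
  fixes a :: "nat \<Rightarrow> real"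
  assumes "finite S"
  shows "(\<Sum>i\<in>S. \<Sum>j\<in>S. a i * a j * (if i = j then s else r))
         = (s - r) * (\<Sum>i\<in>S. (a i)\<^sup>2) + r * (\<Sum>i\<in>S. a i)\<^sup>2"
proof -
  have inner: "(\<Sum>j\<in>S. a i * a j * (if i = j then s else r)) = (s - r) * (a i)\<^sup>2 + r * a i * (\<Sum>j\<in>S. a j)"
    if "i \<in> S" for i
  proof -
    have "(\<Sum>j\<in>S. a i * a j * (if i = j then s else r)) = (\<Sum>j\<in>S. r * a i * a j + (if i = j then (s - r) * a i * a j else 0))"
      by (intro sum.cong) (auto simp: algebra_simps)
    also have "\<dots> = r * a i * (\<Sum>j\<in>S. a j) + (s - r) * (a i)\<^sup>2"
      using assms that by (simp add: sum.distrib sum_distrib_left power2_eq_square mult.assoc)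
    finally show ?thesis by simp
  qed
  have B: "(\<Sum>i\<in>S. (r * a i) * (\<Sum>j\<in>S. a j)) = r * (\<Sum>i\<in>S. a i)\<^sup>2"
    by (simp only: sum_distrib_right[symmetric] sum_distrib_left[symmetric] power2_eq_square mult.assoc)
  have "(\<Sum>i\<in>S. \<Sum>j\<in>S. a i * a j * (if i = j then s else r)) = (\<Sum>i\<in>S. (s - r) * (a i)\<^sup>2 + r * a i * (\<Sum>j\<in>S. a j))"
    by (intro sum.cong) (auto simp: inner)
  also have "\<dots> = (s - r) * (\<Sum>i\<in>S. (a i)\<^sup>2) + (\<Sum>i\<in>S. (r * a i) * (\<Sum>j\<in>S. a j))"
    by (simp only: sum.distrib sum_distrib_left[symmetric])
  also have "\<dots> = (s - r) * (\<Sum>i\<in>S. (a i)\<^sup>2) + r * (\<Sum>i\<in>S. a i)\<^sup>2"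
    by (simp only: B)
  finally show ?thesis .
qed

lemma sum_point:
  fixes f :: "'a \<Rightarrow> real"
  assumes "finite S" "i \<in> S"
  shows "(\<Sum>j\<in>S. f j) = f i + (\<Sum>j\<in>S-{i}. f j)"
  using assms by (simp add: sum.remove)

lemma sum_if_const:
  fixes a b :: real
  assumes "finite S" "i \<in> S"
  shows "(\<Sum>j\<in>S. if j = i then a else b) = a + (real (card S) - 1) * b"
proof -
  have "(\<Sum>j\<in>S. if j = i then a else b) = a + (\<Sum>j\<in>S-{i}. if j = i then a else b)"
    using sum_point[OF assms, of "\<lambda>j. if j = i then a else b"] by simp
  also have "(\<Sum>j\<in>S-{i}. if j = i then a else b) = (\<Sum>j\<in>S-{i}. b)"
    by (rule sum.cong) auto
  also have "\<dots> = real (card (S - {i})) * b" by simp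
  also have "card (S - {i}) = card S - 1" using assms by (simp add: card_Diff_singleton)
  also have "real (card S - 1) = real (card S) - 1"
    using assms by (subst of_nat_diff) (auto simp: Suc_le_eq card_gt_0_iff)
  finally show ?thesis .
qed

lemma gv_dist:
  assumes "gaussian_vector M I X m C"
    and "(\<Sum>i\<in>I. \<Sum>j\<in>I. cf i * cf j * C i j) > 0"
  shows "distributed M lborel (\<lambda>\<omega>. \<Sum>i\<in>I. cf i * X i \<omega>)
           (\<lambda>x. ennreal (normal_density (\<Sum>i\<in>I. cf i * m i) (sqrt (\<Sum>i\<in>I. \<Sum>j\<in>I. cf i * cf j * C i j)) x))"
proof -
  have "\<forall>c :: nat \<Rightarrow> real. (let Y = (\<lambda>\<omega>. \<Sum>i\<in>I. c i * X i \<omega>);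
            mu = (\<Sum>i\<in>I. c i * m i);
            v = (\<Sum>i\<in>I. \<Sum>j\<in>I. c i * c j * C i j)
        in v \<ge> 0 \<and>
           (v > 0 \<longrightarrow> distributed M lborel Y (\<lambda>x. ennreal (normal_density mu (sqrt v) x))) \<and>
           (v = 0 \<longrightarrow> (AE \<omega> in M. Y \<omega> = mu)))"
    using assms(1) unfolding gaussian_vector_def by (rule conjunct2)
  then have "let Y = (\<lambda>\<omega>. \<Sum>i\<in>I. cf i * X i \<omega>);
            mu = (\<Sum>i\<in>I. cf i * m i);
            v = (\<Sum>i\<in>I. \<Sum>j\<in>I. cf i * cf j * C i j)
        in v \<ge> 0 \<and>
           (v > 0 \<longrightarrow> distributed M lborel Y (\<lambda>x. ennreal (normal_density mu (sqrt v) x))) \<and>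
           (v = 0 \<longrightarrow> (AE \<omega> in M. Y \<omega> = mu))" by (rule spec)
  then show ?thesis using assms(2) unfolding Let_def by blast
qed

lemma gv_meas:
  assumes "gaussian_vector M I X m C" "i \<in> I"
  shows "X i \<in> borel_measurable M"
  using assms(1) unfolding gaussian_vector_def using assms(2) by (elim conjE) (rule bspec)

lemma maxdiff: "\<bar>max (a::real) 0 - max b 0\<bar> \<le> \<bar>a - b\<bar>"
  by (simp add: max_def)

lemma maxle3: "max ((a::real) + b + c) 0 \<le> \<bar>a\<bar> + \<bar>b\<bar> + \<bar>c\<bar>"
  using abs_ge_self[of a] abs_ge_self[of b] abs_ge_self[of c] abs_ge_zero[of a] abs_ge_zero[of b] abs_ge_zero[of c]
  by (simp add: max_def)

lemma key_uncorr:
  fixes M :: "'a measure" and X V :: "'a \<Rightarrow> real"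
  assumes P: "prob_space M"
    and Xm[measurable]: "X \<in> borel_measurable M" and Vm[measurable]: "V \<in> borel_measurable M"
    and iX: "integrable M X" and iV: "integrable M V"
    and sig: "\<sigma> > 0" and kap: "\<kappa> \<ge> 0"
    and D: "\<And>t. distributed M lborel (\<lambda>\<omega>. X \<omega> + t * V \<omega>)
               (\<lambda>x. ennreal (normal_density m (sqrt (\<sigma>\<^sup>2 + \<kappa> * t\<^sup>2)) x))"
  shows "(\<integral>\<omega>. indicator {z<..} (X \<omega>) * V \<omega> \<partial>M) = 0"
proof -
  interpret prob_space M by (rule P)
  define Fs where "Fs s = (\<integral>u. std_normal_density u * max (m + s*u - z) 0 \<partial>lborel)" for s
  define K where "K = (\<integral>u. std_normal_density u * \<bar>u\<bar> \<partial>lborel)"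
  define st where "st t = sqrt (\<sigma>\<^sup>2 + \<kappa> * t\<^sup>2)" for t
  have st_pos: "st t > 0" for t
    unfolding st_def using sig kap by (intro real_sqrt_gt_zero) (simp add: add_pos_nonneg)
  have st0: "st 0 = \<sigma>" unfolding st_def using sig by simp
  have iK: "integrable lborel (\<lambda>u. std_normal_density u * \<bar>u\<bar>)"
    using integrable_std_normal_moment_abs[of 1] by simp
  have K0: "K \<ge> 0" unfolding K_def by (intro integral_nonneg_AE) auto
  have E: "(\<integral>\<omega>. max (X \<omega> + t * V \<omega> - z) 0 \<partial>M) = Fs (st t)" for t
  proof -
    have "distributed M lborel (\<lambda>\<omega>. (X \<omega> + t*V \<omega> - m) / st t) std_normal_density"
      using D[of t] normal_standard_normal_convert[OF st_pos[of t], of "\<lambda>\<omega>. X \<omega> + t * V \<omega>" m]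
      unfolding st_def by simp
    from distributed_integral[OF this, of "\<lambda>u. max (m + st t * u - z) 0"]
    have "Fs (st t) = (\<integral>\<omega>. max (m + st t * ((X \<omega> + t * V \<omega> - m) / st t) - z) 0 \<partial>M)"
      unfolding Fs_def by simp
    also have "\<dots> = (\<integral>\<omega>. max (X \<omega> + t * V \<omega> - z) 0 \<partial>M)"
      using st_pos[of t] by simp
    finally show ?thesis by simp
  qed
  have int_std: "integrable lborel (\<lambda>u. std_normal_density u * max (m + s*u - z) 0)" for s
  proof (rule Bochner_Integration.integrable_bound)
    show "integrable lborel (\<lambda>u. \<bar>m - z\<bar> * std_normal_density u + \<bar>s\<bar> * (std_normal_density u * \<bar>u\<bar>))"
      using iK by auto
    show "AE x in lborel. norm (std_normal_density x * max (m + s * x - z) 0)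
        \<le> norm (\<bar>m - z\<bar> * std_normal_density x + \<bar>s\<bar> * (std_normal_density x * \<bar>x\<bar>))"
    proof (intro AE_I2)
      fix x
      have "max (m + s * x - z) 0 \<le> \<bar>m - z\<bar> + \<bar>s\<bar> * \<bar>x\<bar>"
        using maxle3[of "m - z" "s * x" 0] by (simp add: abs_mult algebra_simps)
      then have "std_normal_density x * max (m + s * x - z) 0 \<le> std_normal_density x * (\<bar>m - z\<bar> + \<bar>s\<bar> * \<bar>x\<bar>)"
        by (intro mult_left_mono) auto
      then show "norm (std_normal_density x * max (m + s * x - z) 0)
        \<le> norm (\<bar>m - z\<bar> * std_normal_density x + \<bar>s\<bar> * (std_normal_density x * \<bar>x\<bar>))"
        by (simp add: algebra_simps)
    qed
  qed simp
  have lip: "\<bar>Fs s - Fs s'\<bar> \<le> \<bar>s - s'\<bar> * K" for s s'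
  proof -
    have eqF: "Fs s - Fs s' = (\<integral>u. std_normal_density u * max (m + s*u - z) 0 - std_normal_density u * max (m + s'*u - z) 0 \<partial>lborel)"
      unfolding Fs_def by (rule Bochner_Integration.integral_diff[symmetric]) (rule int_std)+
    have "\<bar>(\<integral>u. std_normal_density u * max (m + s*u - z) 0 - std_normal_density u * max (m + s'*u - z) 0 \<partial>lborel)\<bar> \<le> (\<integral>u. \<bar>s - s'\<bar> * (std_normal_density u * \<bar>u\<bar>) \<partial>lborel)"
    proof (rule integral_abs_bound_integral)
      show "integrable lborel (\<lambda>u. \<bar>s - s'\<bar> * (std_normal_density u * \<bar>u\<bar>))" using iK by auto
      show "integrable lborel (\<lambda>u. std_normal_density u * max (m + s*u - z) 0 - std_normal_density u * max (m + s'*u - z) 0)"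
        using int_std by (intro Bochner_Integration.integrable_diff)
      fix u :: real
      have "\<bar>max (m + s*u - z) 0 - max (m + s'*u - z) 0\<bar> \<le> \<bar>(m + s*u - z) - (m + s'*u - z)\<bar>"
        by (rule maxdiff)
      also have "\<dots> = \<bar>s - s'\<bar> * \<bar>u\<bar>" by (simp add: left_diff_distrib[symmetric] abs_mult)
      finally have "\<bar>max (m + s*u - z) 0 - max (m + s'*u - z) 0\<bar> \<le> \<bar>s - s'\<bar> * \<bar>u\<bar>" .
      then have "std_normal_density u * \<bar>max (m + s*u - z) 0 - max (m + s'*u - z) 0\<bar> \<le> std_normal_density u * (\<bar>s - s'\<bar> * \<bar>u\<bar>)"
        by (intro mult_left_mono) auto
      moreover have "\<bar>std_normal_density u * max (m + s*u - z) 0 - std_normal_density u * max (m + s'*u - z) 0\<bar>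
          = std_normal_density u * \<bar>max (m + s*u - z) 0 - max (m + s'*u - z) 0\<bar>"
        by (simp add: right_diff_distrib[symmetric] abs_mult)
      moreover have "std_normal_density u * (\<bar>s - s'\<bar> * \<bar>u\<bar>) = \<bar>s - s'\<bar> * (std_normal_density u * \<bar>u\<bar>)"
        by (simp only: mult_ac)
      ultimately show "\<bar>std_normal_density u * max (m + s*u - z) 0 - std_normal_density u * max (m + s'*u - z) 0\<bar>
          \<le> \<bar>s - s'\<bar> * (std_normal_density u * \<bar>u\<bar>)" by simp
    qed
    also have "\<dots> = \<bar>s - s'\<bar> * K" unfolding K_def by (rule integral_mult_right_zero)
    finally show ?thesis unfolding eqF .
  qed
  have stdiff: "\<bar>st t - \<sigma>\<bar> \<le> \<kappa> * t\<^sup>2 / \<sigma>" for t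
  proof -
    have "st t \<ge> \<sigma>" unfolding st_def using sig kap
      by (intro real_le_rsqrt) simp
    have sq: "(st t)\<^sup>2 = \<sigma>\<^sup>2 + \<kappa> * t\<^sup>2" unfolding st_def using kap
      by (simp add: add_nonneg_nonneg)
    then have "(st t - \<sigma>) * (st t + \<sigma>) = \<kappa> * t\<^sup>2"
      by (simp add: algebra_simps power2_eq_square)
    moreover note \<open>st t \<ge> \<sigma>\<close>
    ultimately have "st t - \<sigma> = \<kappa> * t\<^sup>2 / (st t + \<sigma>)" using sig
      by (simp add: eq_divide_eq)
    also have "\<dots> \<le> \<kappa> * t\<^sup>2 / \<sigma>" using sig kap st_pos[of t]
      by (intro divide_left_mono) auto
    finally show ?thesis using \<open>st t \<ge> \<sigma>\<close> by simp
  qed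

  define tk where "tk k = inverse (real (Suc k))" for k
  have tk_pos: "tk k > 0" for k unfolding tk_def by simp
  have tk_lim: "tk \<longlonglongrightarrow> 0" unfolding tk_def by (rule LIMSEQ_inverse_real_of_nat)
  define q where "q k \<omega> = (max (X \<omega> + tk k * V \<omega> - z) 0 - max (X \<omega> - z) 0) / tk k" for k \<omega>
  have int_max: "integrable M (\<lambda>\<omega>. max (X \<omega> + t * V \<omega> - z) 0)" for t
  proof (rule Bochner_Integration.integrable_bound)
    show "integrable M (\<lambda>\<omega>. \<bar>X \<omega>\<bar> + \<bar>t\<bar> * \<bar>V \<omega>\<bar> + \<bar>z\<bar>)"
      using iX iV by auto
    show "AE x in M. norm (max (X x + t * V x - z) 0) \<le> norm (\<bar>X x\<bar> + \<bar>t\<bar> * \<bar>V x\<bar> + \<bar>z\<bar>)"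
      using maxle3[of "X _" "t * V _" "-z"] by (intro AE_I2) (simp add: abs_mult)
  qed simp
  have Eq: "(\<integral>\<omega>. q k \<omega> \<partial>M) = (Fs (st (tk k)) - Fs \<sigma>) / tk k" for k
  proof -
    have "(\<integral>\<omega>. q k \<omega> \<partial>M) = (\<integral>\<omega>. max (X \<omega> + tk k * V \<omega> - z) 0 - max (X \<omega> - z) 0 \<partial>M) / tk k"
      unfolding q_def by (rule integral_divide_zero)
    also have "\<dots> = ((\<integral>\<omega>. max (X \<omega> + tk k * V \<omega> - z) 0 \<partial>M) - (\<integral>\<omega>. max (X \<omega> + 0 * V \<omega> - z) 0 \<partial>M)) / tk k"
      using int_max[of "tk k"] int_max[of 0] by (subst Bochner_Integration.integral_diff) auto
    also have "\<dots> = (Fs (st (tk k)) - Fs \<sigma>) / tk k"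
      unfolding E st0 ..
    finally show ?thesis .
  qed
  have lim1: "(\<lambda>k. \<integral>\<omega>. q k \<omega> \<partial>M) \<longlonglongrightarrow> 0"
  proof (rule Lim_null_comparison)
    show "\<forall>\<^sub>F k in sequentially. norm (\<integral>\<omega>. q k \<omega> \<partial>M) \<le> K * \<kappa> / \<sigma> * tk k"
    proof (intro always_eventually allI)
      fix k
      have "norm (\<integral>\<omega>. q k \<omega> \<partial>M) = \<bar>Fs (st (tk k)) - Fs \<sigma>\<bar> / tk k"
        using tk_pos[of k] by (simp add: Eq)
      also have "\<dots> \<le> (\<bar>st (tk k) - \<sigma>\<bar> * K) / tk k"
        using tk_pos[of k] lip by (intro divide_right_mono) auto
      also have "\<dots> \<le> ((\<kappa> * (tk k)\<^sup>2 / \<sigma>) * K) / tk k"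
        using tk_pos[of k] stdiff K0 by (intro divide_right_mono mult_right_mono) auto
      also have "\<dots> = K * \<kappa> / \<sigma> * tk k"
        using tk_pos[of k] by (simp add: power2_eq_square)
      finally show "norm (\<integral>\<omega>. q k \<omega> \<partial>M) \<le> K * \<kappa> / \<sigma> * tk k" .
    qed
    show "(\<lambda>k. K * \<kappa> / \<sigma> * tk k) \<longlonglongrightarrow> 0"
      using tendsto_mult[OF tendsto_const tk_lim, of "K * \<kappa> / \<sigma>"] by simp
  qed
  have DX: "distributed M lborel X (\<lambda>x. ennreal (normal_density m \<sigma> x))"
    using D[of 0] sig by simp
  have AEz: "AE \<omega> in M. X \<omega> \<noteq> z"
  proof -
    have "AE x in density lborel (\<lambda>x. ennreal (normal_density m \<sigma> x)). x \<noteq> z"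
      by (subst AE_density) (auto intro: AE_mp[OF AE_lborel_singleton[of z]])
    moreover have dd: "distr M lborel X = density lborel (\<lambda>x. ennreal (normal_density m \<sigma> x))"
      using DX unfolding distributed_def by blast
    ultimately have "AE x in distr M lborel X. x \<noteq> z" by (simp only: dd)
    then show ?thesis by (subst (asm) AE_distr_iff) auto
  qed
  have lim2: "(\<lambda>k. \<integral>\<omega>. q k \<omega> \<partial>M) \<longlonglongrightarrow> (\<integral>\<omega>. indicator {z<..} (X \<omega>) * V \<omega> \<partial>M)"
  proof (rule integral_dominated_convergence[where w="\<lambda>\<omega>. \<bar>V \<omega>\<bar>"])
    show "(\<lambda>\<omega>. indicator {z<..} (X \<omega>) * V \<omega>) \<in> borel_measurable M" by measurable
    show "q k \<in> borel_measurable M" for k unfolding q_def by measurable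
    show "integrable M (\<lambda>\<omega>. \<bar>V \<omega>\<bar>)" using iV by auto
    show "AE \<omega> in M. norm (q k \<omega>) \<le> \<bar>V \<omega>\<bar>" for k
    proof (intro AE_I2)
      fix \<omega>
      have "\<bar>max (X \<omega> + tk k * V \<omega> - z) 0 - max (X \<omega> - z) 0\<bar> \<le> \<bar>(X \<omega> + tk k * V \<omega> - z) - (X \<omega> - z)\<bar>"
        by (rule maxdiff)
      also have "\<dots> = tk k * \<bar>V \<omega>\<bar>" using tk_pos[of k] by (simp add: abs_mult)
      finally have "\<bar>max (X \<omega> + tk k * V \<omega> - z) 0 - max (X \<omega> - z) 0\<bar> \<le> tk k * \<bar>V \<omega>\<bar>" .
      then show "norm (q k \<omega>) \<le> \<bar>V \<omega>\<bar>"
        unfolding q_def using tk_pos[of k] by (simp add: divide_le_eq mult.commute)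
    qed
    show "AE \<omega> in M. (\<lambda>k. q k \<omega>) \<longlonglongrightarrow> indicator {z<..} (X \<omega>) * V \<omega>"
      using AEz
    proof eventually_elim
      fix \<omega> assume ne: "X \<omega> \<noteq> z"
      have tl: "(\<lambda>k. tk k * \<bar>V \<omega>\<bar>) \<longlonglongrightarrow> 0"
        using tendsto_mult[OF tk_lim tendsto_const, of "\<bar>V \<omega>\<bar>"] by simp
      have ev: "\<forall>\<^sub>F k in sequentially. tk k * \<bar>V \<omega>\<bar> < \<bar>X \<omega> - z\<bar>"
        using order_tendstoD(2)[OF tl] ne by simp
      show "(\<lambda>k. q k \<omega>) \<longlonglongrightarrow> indicator {z<..} (X \<omega>) * V \<omega>"
      proof (rule tendsto_eventually)
        show "\<forall>\<^sub>F k in sequentially. q k \<omega> = indicator {z<..} (X \<omega>) * V \<omega>"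
          using ev
        proof eventually_elim
          fix k assume lt: "tk k * \<bar>V \<omega>\<bar> < \<bar>X \<omega> - z\<bar>"
          have a: "\<bar>tk k * V \<omega>\<bar> < \<bar>X \<omega> - z\<bar>" using lt tk_pos[of k] by (simp add: abs_mult)
          show "q k \<omega> = indicator {z<..} (X \<omega>) * V \<omega>"
          proof (cases "X \<omega> > z")
            case True
            then have "X \<omega> + tk k * V \<omega> - z > 0" using a by linarith
            then show ?thesis unfolding q_def using True tk_pos[of k] by simp
          next
            case False
            then have "X \<omega> + tk k * V \<omega> - z < 0" using a ne by linarith
            then show ?thesis unfolding q_def using False ne by simp
          qed
        qed
      qed
    qed
  qed
  from LIMSEQ_unique[OF lim2 lim1] show ?thesis .
qed

lemma H_analysis:
  fixes \<mu> \<sigma> c b :: real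
  assumes sig: "\<sigma> > 0" and cpos: "c > 0" and bneg: "b < 0"
    and G_def: "G = (\<lambda>x. normal_density \<mu> \<sigma> x * (c * x + b))"
    and H_def: "H = (\<lambda>z. \<integral>x. indicator {z<..} x * G x \<partial>lborel)"
  shows "(H has_real_derivative - G 0) (at 0)" and "- G 0 > 0"
    and "\<forall>z. H z \<le> H (-b/c)" and "H (-b/c) > 0"
proof -
  have Gm[measurable]: "G \<in> borel_measurable borel" unfolding G_def by measurable
  have iG: "integrable lborel G"
  proof -
    have "integrable lborel (\<lambda>x. c * (normal_density \<mu> \<sigma> x * x) + b * normal_density \<mu> \<sigma> x)"
      using integrable_normal_moment_nz_1[OF sig, of \<mu>] integrable_normal_density[OF sig, of \<mu>]
      by (intro Bochner_Integration.integrable_add integrable_mult_right) auto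
    then show ?thesis unfolding G_def by (simp add: algebra_simps)
  qed
  have iGA: "integrable lborel (\<lambda>x. indicator A x * G x)" if "A \<in> sets borel" for A
    using integrable_mult_indicator[of A lborel G] iG that by simp
  have contG: "continuous_on S G" for S
    unfolding G_def normal_density_def using sig by (intro continuous_intros) auto
  show "- G 0 > 0" unfolding G_def using normal_density_pos[OF sig, of \<mu> 0] bneg
    by (simp add: mult_pos_neg)
  have Hdiff: "H z - H w = (\<integral>x. (indicator {z<..} x - indicator {w<..} x) * G x \<partial>lborel)" for z w
    unfolding H_def using iGA[of "{z<..}"] iGA[of "{w<..}"]
    by (subst Bochner_Integration.integral_diff[symmetric]) (auto simp: left_diff_distrib)
  define zs where "zs = -b/c"
  have Gsign1: "G x \<le> 0" if "x \<le> zs" for x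
  proof -
    have "c * x \<le> c * zs" using that cpos by simp
    then have "c * x + b \<le> 0" unfolding zs_def using cpos by simp
    then show ?thesis unfolding G_def by (simp add: mult_nonneg_nonpos)
  qed
  have Gsign2: "G x > 0" if "x > zs" for x
  proof -
    have "c * x > c * zs" using that cpos by simp
    then have "c * x + b > 0" unfolding zs_def using cpos by simp
    then show ?thesis unfolding G_def using normal_density_pos[OF sig] by simp
  qed
  show "\<forall>z. H z \<le> H (-b/c)"
  proof
    fix z
    have "(\<integral>x. (indicator {z<..} x - indicator {zs<..} x) * G x \<partial>lborel) \<le> (\<integral>x. 0 \<partial>(lborel::real measure))"
    proof (rule Bochner_Integration.integral_mono)
      show "integrable lborel (\<lambda>x. (indicator {z<..} x - indicator {zs<..} x) * G x)"
        using iGA[of "{z<..}"] iGA[of "{zs<..}"]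
        by (auto simp: left_diff_distrib)
      fix x
      show "(indicator {z<..} x - indicator {zs<..} x) * G x \<le> 0"
      proof (cases "x \<le> zs")
        case True
        then show ?thesis using Gsign1[OF True]
          by (auto simp: indicator_def mult_nonneg_nonpos)
      next
        case False
        then show ?thesis using Gsign2[of x]
          by (auto simp: indicator_def)
      qed
    qed simp
    then show "H z \<le> H (-b/c)" using Hdiff[of z zs] unfolding zs_def by simp
  qed
  show "H (-b/c) > 0"
  proof -
    have nn: "AE x in lborel. 0 \<le> indicator {zs<..} x * G x"
      using Gsign2 by (intro AE_I2) (auto simp: indicator_def less_imp_le)
    have "H zs \<ge> 0" unfolding H_def using nn by (rule integral_nonneg_AE)
    moreover have "H zs \<noteq> 0"
    proof
      assume "H zs = 0"
      then have "AE x in lborel. indicator {zs<..} x * G x = 0"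
        unfolding H_def using integral_nonneg_eq_0_iff_AE[OF iGA[of "{zs<..}"] nn] by simp
      then have "{x \<in> space lborel. \<not> indicator {zs<..} x * G x = 0} \<in> null_sets lborel"
        by (subst (asm) AE_iff_null) auto
      moreover have "{x \<in> space lborel. \<not> indicator {zs<..} x * G x = 0} = {zs<..}"
        using Gsign2 by (auto simp: indicator_def) (metis less_irrefl)
      ultimately have "emeasure lborel {zs<..} = 0" by (simp add: null_sets_def)
      moreover have "emeasure lborel {zs<..<zs+1} \<le> emeasure lborel {zs<..}"
        by (rule emeasure_mono) auto
      ultimately show False by simp
    qed
    ultimately show ?thesis unfolding zs_def by simp
  qed
  have Hint: "H z = H 0 - (LBINT y=0..z. G y)" for z
  proof (cases "0 \<le> z")
    case True
    have "H 0 - H z = (\<integral>x. (indicator {0<..} x - indicator {z<..} x) * G x \<partial>lborel)"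
      by (rule Hdiff)
    also have "\<dots> = (\<integral>x. indicator {0<..z} x * G x \<partial>lborel)"
      using True by (intro Bochner_Integration.integral_cong) (auto simp: indicator_def)
    also have "\<dots> = (LBINT y=0..z. G y)"
      using True interval_integral_Ioc[of 0 z G] by (simp add: set_lebesgue_integral_def zero_ereal_def)
    finally show ?thesis by simp
  next
    case False
    have "H z - H 0 = (\<integral>x. (indicator {z<..} x - indicator {0<..} x) * G x \<partial>lborel)"
      by (rule Hdiff)
    also have "\<dots> = (\<integral>x. indicator {z<..0} x * G x \<partial>lborel)"
      using False by (intro Bochner_Integration.integral_cong) (auto simp: indicator_def)
    also have "\<dots> = (LBINT y=z..0. G y)"
      using False interval_integral_Ioc[of z 0 G] by (simp add: set_lebesgue_integral_def zero_ereal_def)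
    also have "\<dots> = - (LBINT y=0..z. G y)"
      by (rule interval_integral_endpoints_reverse)
    finally show ?thesis by simp
  qed
  have "((\<lambda>u. LBINT y=0..u. G y) has_vector_derivative G 0) (at 0 within {-1..1})"
    using interval_integral_FTC2[of "-1" 0 1 G 0] contG[of "{-1..1}"] by (simp add: zero_ereal_def)
  moreover have "at (0::real) within {-1..1} = at 0" by (rule at_within_interior) simp
  ultimately have "((\<lambda>u. LBINT y=0..u. G y) has_real_derivative G 0) (at 0)"
    unfolding has_real_derivative_iff_has_vector_derivative by simp
  then have "((\<lambda>z. H 0 - (LBINT y=0..z. G y)) has_real_derivative 0 - G 0) (at 0)"
    by (intro DERIV_diff DERIV_const)
  moreover have "(\<lambda>z. H 0 - (LBINT y=0..z. G y)) = H" by (rule ext) (rule Hint[symmetric])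
  ultimately show "(H has_real_derivative - G 0) (at 0)" by simp
qed

lemma indep_lift:
  fixes M :: "'a measure" and N :: "'b measure" and Y :: "'a \<Rightarrow> 'b" and g :: "'b \<Rightarrow> real"
  assumes P: "prob_space M" and Ym[measurable]: "Y \<in> measurable M N"
    and Qm[measurable]: "{\<omega>\<in>space M. Q \<omega>} \<in> sets M"
    and ind: "\<And>B. B \<in> sets N \<Longrightarrow> measure M {\<omega>\<in>space M. Q \<omega> \<and> Y \<omega> \<in> B}
               = measure M {\<omega>\<in>space M. Q \<omega>} * measure M {\<omega>\<in>space M. Y \<omega> \<in> B}"
    and gm[measurable]: "g \<in> borel_measurable N"
  shows "(\<integral>\<omega>. indicator {\<omega>\<in>space M. Q \<omega>} \<omega> * g (Y \<omega>) \<partial>M)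
         = measure M {\<omega>\<in>space M. Q \<omega>} * (\<integral>\<omega>. g (Y \<omega>) \<partial>M)"
proof -
  interpret prob_space M by (rule P)
  define E where "E = {\<omega>\<in>space M. Q \<omega>}"
  have Em[measurable]: "E \<in> sets M" unfolding E_def by (rule Qm)
  define d where "d = (\<lambda>x. indicator E x :: real)"
  have dm[measurable]: "d \<in> borel_measurable M" unfolding d_def by measurable
  define M1 where "M1 = density M (\<lambda>x. ennreal (d x))"
  have sM1: "sets M1 = sets M" unfolding M1_def by simp
  have Y1[measurable]: "Y \<in> measurable M1 N"
    using Ym by (simp add: measurable_cong_sets[OF sM1 refl])
  define \<nu>1 where "\<nu>1 = distr M1 N Y"
  define \<nu>2 where "\<nu>2 = density (distr M N Y) (\<lambda>_. ennreal (measure M E))"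
  have eq: "\<nu>1 = \<nu>2"
  proof (rule measure_eqI)
    show "sets \<nu>1 = sets \<nu>2" unfolding \<nu>1_def \<nu>2_def by simp
    fix B assume "B \<in> sets \<nu>1"
    then have B[measurable]: "B \<in> sets N" unfolding \<nu>1_def by simp
    have pre[measurable]: "Y -` B \<inter> space M \<in> sets M" by measurable
    have "emeasure \<nu>1 B = emeasure M1 (Y -` B \<inter> space M1)"
      unfolding \<nu>1_def by (rule emeasure_distr) (auto)
    also have "\<dots> = (\<integral>\<^sup>+x. ennreal (d x) * indicator (Y -` B \<inter> space M) x \<partial>M)"
      unfolding M1_def by (subst emeasure_density) auto
    also have "\<dots> = (\<integral>\<^sup>+x. indicator {\<omega>\<in>space M. Q \<omega> \<and> Y \<omega> \<in> B} x \<partial>M)"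
      by (intro nn_integral_cong) (auto simp: d_def E_def indicator_def)
    also have "\<dots> = emeasure M {\<omega>\<in>space M. Q \<omega> \<and> Y \<omega> \<in> B}"
      by (rule nn_integral_indicator) measurable
    also have "\<dots> = ennreal (measure M E * measure M {\<omega>\<in>space M. Y \<omega> \<in> B})"
      unfolding emeasure_eq_measure E_def using ind[OF B] by simp
    finally have 1: "emeasure \<nu>1 B = ennreal (measure M E * measure M {\<omega>\<in>space M. Y \<omega> \<in> B})" .
    have "emeasure \<nu>2 B = (\<integral>\<^sup>+x. ennreal (measure M E) * indicator B x \<partial>distr M N Y)"
      unfolding \<nu>2_def by (subst emeasure_density) auto
    also have "\<dots> = ennreal (measure M E) * emeasure (distr M N Y) B"
      by (rule nn_integral_cmult_indicator) simp
    also have "\<dots> = ennreal (measure M E) * emeasure M (Y -` B \<inter> space M)"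
      by (subst emeasure_distr) auto
    also have "Y -` B \<inter> space M = {\<omega>\<in>space M. Y \<omega> \<in> B}" by auto
    also have "ennreal (measure M E) * emeasure M {\<omega>\<in>space M. Y \<omega> \<in> B}
        = ennreal (measure M E * measure M {\<omega>\<in>space M. Y \<omega> \<in> B})"
      unfolding emeasure_eq_measure by (simp add: ennreal_mult)
    finally show "emeasure \<nu>1 B = emeasure \<nu>2 B" using 1 by simp
  qed
  have "(\<integral>\<omega>. indicator E \<omega> * g (Y \<omega>) \<partial>M) = (\<integral>\<omega>. d \<omega> *\<^sub>R g (Y \<omega>) \<partial>M)"
    unfolding d_def by simp
  also have "\<dots> = (\<integral>\<omega>. g (Y \<omega>) \<partial>M1)"
    unfolding M1_def by (rule integral_density[symmetric]) (auto simp: d_def)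
  also have "\<dots> = (\<integral>x. g x \<partial>\<nu>1)"
    unfolding \<nu>1_def by (rule integral_distr[symmetric]) auto
  also have "\<dots> = (\<integral>x. g x \<partial>\<nu>2)" by (simp add: eq)
  also have "\<dots> = (\<integral>x. measure M E *\<^sub>R g x \<partial>distr M N Y)"
    unfolding \<nu>2_def by (rule integral_density) auto
  also have "\<dots> = measure M E * (\<integral>x. g x \<partial>distr M N Y)" by simp
  also have "\<dots> = measure M E * (\<integral>\<omega>. g (Y \<omega>) \<partial>M)"
    by (subst integral_distr) auto
  finally show ?thesis unfolding E_def .
qed

lemma int_ind:
  fixes f g :: "'a \<Rightarrow> real"
  assumes "integrable M f" "g \<in> borel_measurable M"
  shows "integrable M (\<lambda>\<omega>. indicator {z<..} (g \<omega>) * f \<omega>)"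
proof (rule Bochner_Integration.integrable_bound[OF assms(1)])
  show "(\<lambda>\<omega>. indicator {z<..} (g \<omega>) * f \<omega>) \<in> borel_measurable M"
    using assms by measurable
  show "AE x in M. norm (indicator {z<..} (g x) * f x) \<le> norm (f x)"
    by (intro AE_I2) (auto simp: indicator_def)
qed

theorem proposition6:
  fixes M :: "'a measure" and n :: nat and A :: "'a \<Rightarrow> nat"
    and X :: "nat \<Rightarrow> 'a \<Rightarrow> real" and \<mu> \<sigma> \<rho> :: real
  assumes "prob_space M"
    and "n \<ge> 2"
    and "A \<in> measurable M (count_space UNIV)"
    and "\<forall>\<omega>\<in>space M. A \<omega> \<in> {1..n}"
    and "gaussian_vector M {1..n} X (\<lambda>i. \<mu>)
           (\<lambda>i j. if i = j then \<sigma>\<^sup>2 else \<rho> * \<sigma>\<^sup>2)"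
    and "\<forall>i. \<forall>B\<in>sets (PiM {1..n} (\<lambda>_. borel)).
           measure M {\<omega>\<in>space M. A \<omega> = i \<and> restrict (\<lambda>j. X j \<omega>) {1..n} \<in> B}
         = measure M {\<omega>\<in>space M. A \<omega> = i}
           * measure M {\<omega>\<in>space M. restrict (\<lambda>j. X j \<omega>) {1..n} \<in> B}"
    and "\<mu> < 0" and "\<sigma> > 0"
    and "- 1 / (real n - 1) < \<rho>" and "\<rho> < 1"
  shows "(\<exists>d. (hfun M n A X has_real_derivative d) (at 0) \<and> d > 0)
       \<and> (let zs = (real n - 1) * (\<rho> - 1) / ((real n - 1) * \<rho> + 1) * \<mu>
          in (\<forall>z. hfun M n A X z \<le> hfun M n A X zs) \<and> hfun M n A X zs > 0)"
proof -
  interpret prob_space M by (rule assms(1))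
  note gv = assms(5)
  have Am[measurable]: "A \<in> measurable M (count_space UNIV)" by (rule assms(3))
  have sig: "\<sigma> > 0" by (rule assms(8))
  have n1: "real n - 1 > 0" using assms(2) by simp
  have fin: "finite {1..n}" by simp
  have cardI: "real (card {1..n}) - 1 = real n - 1" by simp
  define c where "c = 1 + (real n - 1) * \<rho>"
  have "(-1 / (real n - 1)) * (real n - 1) < \<rho> * (real n - 1)"
    using mult_strict_right_mono[OF assms(9) n1] .
  moreover have "(-1 / (real n - 1)) * (real n - 1) = -1" using n1 by simp
  ultimately have "-1 < \<rho> * (real n - 1)" by simp
  then have cpos: "c > 0" unfolding c_def by (simp add: mult.commute)
  define b where "b = (real n - c) * \<mu>"
  have nc: "real n - c = (real n - 1) * (1 - \<rho>)" unfolding c_def by (simp add: algebra_simps)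
  have bneg: "b < 0" unfolding b_def nc using n1 assms(10) assms(7)
    by (intro mult_pos_neg) auto
  define \<kappa> where "\<kappa> = \<sigma>\<^sup>2 * (1 - \<rho>) * (real n - 1) * c"
  have kap: "\<kappa> \<ge> 0" unfolding \<kappa>_def using n1 assms(10) cpos by simp
  have Xm[measurable]: "X j \<in> borel_measurable M" if "j \<in> {1..n}" for j
    using gv_meas[OF gv that] .
  define S where "S \<omega> = (\<Sum>j\<in>{1..n}. X j \<omega>)" for \<omega>
  have Sm[measurable]: "S \<in> borel_measurable M" unfolding S_def by measurable
  define G where "G = (\<lambda>x. normal_density \<mu> \<sigma> x * (c * x + b))"
  define Hz where "Hz = (\<lambda>z. \<integral>x. indicator {z<..} x * G x \<partial>lborel)"
  have sumA: "(\<Sum>j\<in>{1..n}. if j = i then p else q) = p + (real n - 1) * q" if "i \<in> {1..n}" for i p q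
    using sum_if_const[OF fin that, of p q] by simp
  have varA: "(\<Sum>j\<in>{1..n}. \<Sum>k\<in>{1..n}. (if j = i then p else q) * (if k = i then p else q) *
        (if j = k then \<sigma>\<^sup>2 else \<rho> * \<sigma>\<^sup>2))
      = (\<sigma>\<^sup>2 - \<rho> * \<sigma>\<^sup>2) * (p\<^sup>2 + (real n - 1) * q\<^sup>2) + \<rho> * \<sigma>\<^sup>2 * (p + (real n - 1) * q)\<^sup>2"
    if "i \<in> {1..n}" for i p q
  proof -
    have sq: "(\<lambda>j. (if j = i then p else q)\<^sup>2) = (\<lambda>j. if j = i then p\<^sup>2 else q\<^sup>2)" by auto
    show ?thesis
      using qform[OF fin, of "\<lambda>j. if j = i then p else q" "\<sigma>\<^sup>2" "\<rho> * \<sigma>\<^sup>2"]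
      unfolding sq sumA[OF that] sum_if_const[OF fin that] cardI by simp
  qed
  have meanA: "(\<Sum>j\<in>{1..n}. (if j = i then p else q) * \<mu>) = \<mu> * (p + (real n - 1) * q)"
    if "i \<in> {1..n}" for i p q
  proof -
    have "(\<Sum>j\<in>{1..n}. (if j = i then p else q) * \<mu>) = (\<Sum>j\<in>{1..n}. if j = i then p else q) * \<mu>"
      by (rule sum_distrib_right[symmetric])
    also have "\<dots> = (p + (real n - 1) * q) * \<mu>" by (simp only: sumA[OF that])
    also have "\<dots> = \<mu> * (p + (real n - 1) * q)" by (rule mult.commute)
    finally show ?thesis .
  qed
  have combA: "(\<Sum>j\<in>{1..n}. (if j = i then p else q) * X j \<omega>) = p * X i \<omega> + q * (S \<omega> - X i \<omega>)"
    if "i \<in> {1..n}" for i p q \<omega>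
  proof -
    have "(\<Sum>j\<in>{1..n}. (if j = i then p else q) * X j \<omega>) = p * X i \<omega> + (\<Sum>j\<in>{1..n}-{i}. (if j = i then p else q) * X j \<omega>)"
      using sum_point[OF fin that, of "\<lambda>j. (if j = i then p else q) * X j \<omega>"] by simp
    also have "(\<Sum>j\<in>{1..n}-{i}. (if j = i then p else q) * X j \<omega>) = q * (\<Sum>j\<in>{1..n}-{i}. X j \<omega>)"
      by (simp add: sum_distrib_left)
    also have "(\<Sum>j\<in>{1..n}-{i}. X j \<omega>) = S \<omega> - X i \<omega>"
      unfolding S_def using sum_point[OF fin that, of "\<lambda>j. X j \<omega>"] by simp
    finally show ?thesis .
  qed

  have Xdist: "distributed M lborel (X i) (\<lambda>x. ennreal (normal_density \<mu> \<sigma> x))" if i: "i \<in> {1..n}" for i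
  proof -
    let ?cf = "\<lambda>j. if j = i then (1::real) else 0"
    have v: "(\<Sum>j\<in>{1..n}. \<Sum>k\<in>{1..n}. ?cf j * ?cf k * (if j = k then \<sigma>\<^sup>2 else \<rho> * \<sigma>\<^sup>2)) = \<sigma>\<^sup>2"
      unfolding varA[OF i] by (simp add: algebra_simps)
    have "distributed M lborel (\<lambda>\<omega>. \<Sum>j\<in>{1..n}. ?cf j * X j \<omega>)
           (\<lambda>x. ennreal (normal_density (\<Sum>j\<in>{1..n}. ?cf j * \<mu>) (sqrt (\<sigma>\<^sup>2)) x))"
      using gv_dist[OF gv, of ?cf] v sig by simp
    moreover have "(\<lambda>\<omega>. \<Sum>j\<in>{1..n}. ?cf j * X j \<omega>) = X i"
      using combA[OF i, of 1 0] by auto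
    moreover have "(\<Sum>j\<in>{1..n}. ?cf j * \<mu>) = \<mu>"
      by (simp only: meanA[OF i], simp)
    ultimately show ?thesis using sig by simp
  qed
  have iX: "integrable M (X i)" if i: "i \<in> {1..n}" for i
    using distributed_integrable_var[OF Xdist[OF i]] integrable_normal_moment_nz_1[OF sig, of \<mu>] by simp
  have iS: "integrable M S" unfolding S_def using iX by (intro Bochner_Integration.integrable_sum) auto
  have stepA: "(\<integral>\<omega>. indicator {z<..} (X i \<omega>) * S \<omega> \<partial>M) = Hz z" if i: "i \<in> {1..n}" for i z
  proof -
    define V where "V \<omega> = S \<omega> - c * X i \<omega> - b" for \<omega>
    have Vm[measurable]: "V \<in> borel_measurable M" unfolding V_def using Xm[OF i] by measurable
    have iV: "integrable M V" unfolding V_def using iS iX[OF i] by auto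
    have D: "distributed M lborel (\<lambda>\<omega>. X i \<omega> + t * V \<omega>)
               (\<lambda>x. ennreal (normal_density \<mu> (sqrt (\<sigma>\<^sup>2 + \<kappa> * t\<^sup>2)) x))" for t
    proof -
      let ?cf = "\<lambda>j. if j = i then 1 + t * (1 - c) else t"
      have vt: "(\<Sum>j\<in>{1..n}. \<Sum>k\<in>{1..n}. ?cf j * ?cf k * (if j = k then \<sigma>\<^sup>2 else \<rho> * \<sigma>\<^sup>2)) = \<sigma>\<^sup>2 + \<kappa> * t\<^sup>2"
        unfolding varA[OF i] \<kappa>_def c_def by (simp add: algebra_simps power2_eq_square)
      have vpos: "\<sigma>\<^sup>2 + \<kappa> * t\<^sup>2 > 0" using sig kap by (simp add: add_pos_nonneg)
      have "distributed M lborel (\<lambda>\<omega>. \<Sum>j\<in>{1..n}. ?cf j * X j \<omega>)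
           (\<lambda>x. ennreal (normal_density (\<Sum>j\<in>{1..n}. ?cf j * \<mu>) (sqrt (\<sigma>\<^sup>2 + \<kappa> * t\<^sup>2)) x))"
        using gv_dist[OF gv, of ?cf] vt vpos by simp
      moreover have "(\<lambda>\<omega>. \<Sum>j\<in>{1..n}. ?cf j * X j \<omega>) = (\<lambda>\<omega>. X i \<omega> + t * (S \<omega> - c * X i \<omega>))"
        using combA[OF i, of "1 + t * (1 - c)" t] by (auto simp: algebra_simps)
      moreover have "(\<Sum>j\<in>{1..n}. ?cf j * \<mu>) = \<mu> + t * b"
        unfolding meanA[OF i] b_def c_def by (simp add: algebra_simps)
      ultimately have D0: "distributed M lborel (\<lambda>\<omega>. X i \<omega> + t * (S \<omega> - c * X i \<omega>))
           (\<lambda>x. ennreal (normal_density (\<mu> + t * b) (sqrt (\<sigma>\<^sup>2 + \<kappa> * t\<^sup>2)) x))" by simp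
      have "distributed M lborel (\<lambda>\<omega>. - (t * b) + 1 * (X i \<omega> + t * (S \<omega> - c * X i \<omega>)))
           (\<lambda>x. ennreal (normal_density (- (t * b) + 1 * (\<mu> + t * b)) (\<bar>1\<bar> * sqrt (\<sigma>\<^sup>2 + \<kappa> * t\<^sup>2)) x))"
        by (rule normal_density_affine[OF D0]) (use vpos in auto)
      moreover have "(\<lambda>\<omega>. - (t * b) + 1 * (X i \<omega> + t * (S \<omega> - c * X i \<omega>))) = (\<lambda>\<omega>. X i \<omega> + t * V \<omega>)"
        unfolding V_def by (rule ext) (simp add: algebra_simps)
      ultimately show ?thesis by simp
    qed
    have zero: "(\<integral>\<omega>. indicator {z<..} (X i \<omega>) * V \<omega> \<partial>M) = 0"
      by (rule key_uncorr[OF assms(1) Xm[OF i] Vm iX[OF i] iV sig kap D])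
    have i1: "integrable M (\<lambda>\<omega>. indicator {z<..} (X i \<omega>) * (c * X i \<omega> + b))"
      using iX[OF i] Xm[OF i] by (intro int_ind) auto
    have i2: "integrable M (\<lambda>\<omega>. indicator {z<..} (X i \<omega>) * V \<omega>)"
      using iV Xm[OF i] by (intro int_ind) auto
    have "(\<integral>\<omega>. indicator {z<..} (X i \<omega>) * S \<omega> \<partial>M)
        = (\<integral>\<omega>. indicator {z<..} (X i \<omega>) * (c * X i \<omega> + b) + indicator {z<..} (X i \<omega>) * V \<omega> \<partial>M)"
      unfolding V_def by (intro Bochner_Integration.integral_cong) (auto simp: algebra_simps)
    also have "\<dots> = (\<integral>\<omega>. indicator {z<..} (X i \<omega>) * (c * X i \<omega> + b) \<partial>M)"
      using i1 i2 zero by simp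
    also have "\<dots> = (\<integral>x. normal_density \<mu> \<sigma> x * (indicator {z<..} x * (c * x + b)) \<partial>lborel)"
      by (rule distributed_integral[OF Xdist[OF i], symmetric]) auto
    also have "\<dots> = Hz z"
      unfolding Hz_def G_def by (intro Bochner_Integration.integral_cong) (auto simp: algebra_simps)
    finally show ?thesis .
  qed

  define Y where "Y \<omega> = restrict (\<lambda>j. X j \<omega>) {1..n}" for \<omega>
  have Ym[measurable]: "Y \<in> measurable M (PiM {1..n} (\<lambda>_. borel))"
    unfolding Y_def using Xm by (intro measurable_restrict) auto
  have Em[measurable]: "{\<omega>\<in>space M. A \<omega> = i} \<in> sets M" for i by measurable
  have prob1: "(\<Sum>i\<in>{1..n}. measure M {\<omega>\<in>space M. A \<omega> = i}) = 1"
  proof -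
    have "(\<Sum>i\<in>{1..n}. measure M {\<omega>\<in>space M. A \<omega> = i})
        = (\<Sum>i\<in>{1..n}. \<integral>\<omega>. indicator {\<omega>\<in>space M. A \<omega> = i} \<omega> \<partial>M)"
      by (intro sum.cong) auto
    also have "\<dots> = (\<integral>\<omega>. (\<Sum>i\<in>{1..n}. indicator {\<omega>\<in>space M. A \<omega> = i} \<omega>) \<partial>M)"
      by (rule Bochner_Integration.integral_sum[symmetric])
         (auto intro!: integrable_real_indicator simp: less_top[symmetric])
    also have "\<dots> = (\<integral>\<omega>. 1 \<partial>M)"
    proof (intro Bochner_Integration.integral_cong refl)
      fix \<omega> assume w: "\<omega> \<in> space M"
      have "(\<Sum>i\<in>{1..n}. indicator {\<omega>\<in>space M. A \<omega> = i} \<omega> :: real) = (\<Sum>i\<in>{1..n}. if A \<omega> = i then 1 else 0)"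
        using w by (intro sum.cong) (auto simp: indicator_def)
      also have "\<dots> = 1" using assms(4) w by simp
      finally show "(\<Sum>i\<in>{1..n}. indicator {\<omega>\<in>space M. A \<omega> = i} \<omega> :: real) = 1" .
    qed
    also have "\<dots> = 1" using prob_space by simp
    finally show ?thesis .
  qed
  have stepB: "hfun M n A X z = Hz z" for z
  proof -
    define F where "F i \<omega> = indicator {z<..} (X i \<omega>) * S \<omega>" for i \<omega>
    have iF: "integrable M (F i)" if i: "i \<in> {1..n}" for i
      unfolding F_def using iS Xm[OF i] by (intro int_ind) auto
    have "hfun M n A X z = (\<integral>\<omega>. (\<Sum>i\<in>{1..n}. indicator {\<omega>\<in>space M. A \<omega> = i} \<omega> * F i \<omega>) \<partial>M)"
      unfolding hfun_def
    proof (intro Bochner_Integration.integral_cong refl)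
      fix \<omega> assume w: "\<omega> \<in> space M"
      have "(\<Sum>i\<in>{1..n}. indicator {\<omega>\<in>space M. A \<omega> = i} \<omega> * F i \<omega>) = (\<Sum>i\<in>{1..n}. if A \<omega> = i then F i \<omega> else 0)"
        using w by (intro sum.cong) (auto simp: indicator_def)
      also have "\<dots> = F (A \<omega>) \<omega>" using assms(4) w by (simp add: sum.delta')
      also have "\<dots> = (if X (A \<omega>) \<omega> > z then 1 else 0) * (\<Sum>i = 1..n. X i \<omega>)"
        unfolding F_def S_def by (simp add: indicator_def)
      finally show "(if X (A \<omega>) \<omega> > z then 1 else 0) * (\<Sum>i = 1..n. X i \<omega>)
          = (\<Sum>i\<in>{1..n}. indicator {\<omega>\<in>space M. A \<omega> = i} \<omega> * F i \<omega>)" by simp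
    qed
    also have "\<dots> = (\<Sum>i\<in>{1..n}. \<integral>\<omega>. indicator {\<omega>\<in>space M. A \<omega> = i} \<omega> * F i \<omega> \<partial>M)"
    proof (rule Bochner_Integration.integral_sum)
      fix i assume i: "i \<in> {1..n}"
      have "integrable M (\<lambda>\<omega>. F i \<omega> * indicator {\<omega>\<in>space M. A \<omega> = i} \<omega>)"
        using iF[OF i] by (intro integrable_real_mult_indicator) auto
      then show "integrable M (\<lambda>\<omega>. indicator {\<omega>\<in>space M. A \<omega> = i} \<omega> * F i \<omega>)"
        by (simp add: mult.commute)
    qed
    also have "\<dots> = (\<Sum>i\<in>{1..n}. measure M {\<omega>\<in>space M. A \<omega> = i} * Hz z)"
    proof (intro sum.cong refl)
      fix i assume i: "i \<in> {1..n}"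
      define g where "g x = indicator {z<..} (x i) * (\<Sum>j\<in>{1..n}. x j)" for x :: "nat \<Rightarrow> real"
      have gm: "g \<in> borel_measurable (PiM {1..n} (\<lambda>_. borel))"
        unfolding g_def using i by measurable
      have gY: "g (Y \<omega>) = F i \<omega>" for \<omega>
        unfolding g_def Y_def F_def S_def using i by simp
      have "(\<integral>\<omega>. indicator {\<omega>\<in>space M. A \<omega> = i} \<omega> * g (Y \<omega>) \<partial>M)
          = measure M {\<omega>\<in>space M. A \<omega> = i} * (\<integral>\<omega>. g (Y \<omega>) \<partial>M)"
      proof (rule indep_lift[OF assms(1) Ym Em _ gm])
        fix B assume "B \<in> sets (PiM {1..n} (\<lambda>_. borel :: real measure))"
        then show "measure M {\<omega>\<in>space M. A \<omega> = i \<and> Y \<omega> \<in> B}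
            = measure M {\<omega>\<in>space M. A \<omega> = i} * measure M {\<omega>\<in>space M. Y \<omega> \<in> B}"
          using assms(6) unfolding Y_def by blast
      qed
      then show "(\<integral>\<omega>. indicator {\<omega>\<in>space M. A \<omega> = i} \<omega> * F i \<omega> \<partial>M) = measure M {\<omega>\<in>space M. A \<omega> = i} * Hz z"
        unfolding gY F_def using stepA[OF i, of z] by simp
    qed
    also have "\<dots> = Hz z" using prob1 by (simp add: sum_distrib_right[symmetric])
    finally show ?thesis .
  qed
  have hH: "hfun M n A X = Hz" using stepB by (intro ext)
  note HA = H_analysis[OF sig cpos bneg G_def Hz_def]
  have zs_eq: "(real n - 1) * (\<rho> - 1) / ((real n - 1) * \<rho> + 1) * \<mu> = - b / c"
  proof -
    have "(real n - 1) * \<rho> + 1 = c" unfolding c_def by simp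
    then show ?thesis unfolding b_def nc using cpos by (simp add: field_simps)
  qed
  show ?thesis
    unfolding Let_def zs_eq hH using HA by blast
qed

end
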